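(* Let $m\ge 1$ and let $M \subseteq \{1,2,\dots,m\}$ satisfy \[ |M\cap\{1,\dots,k\}| > \tfrac{k}{2} \quad\text{and}\quad |M\cap\{m-k+1,\dots,m\}| > \tfrac{k}{2} \] for every integer $0<k\le m$. Then $M+M=\{2,3,\dots,2m\}$.
   Context: For a finite set $S$ of integers, $S+S=\{s_1+s_2 : s_1,s_2\in S\}$. *)

theory Defs
  imports Main
begin

definition sumset :: "int set \<Rightarrow> int set" where
  "sumset S = {s1 + s2 | s1 s2. s1 \<in> S \<and> s2 \<in> S}"

end

theory Submission
  imports Defs
begin

lemma refl_pair:
  fixes A :: "int set" and a b :: int
  assumes "A \<subseteq> {a..b}" and ab: "a \<le> b" and "2 * int (card A) > b - a + 1"
  shows "\<exists>x\<in>A. a + b - x \<in> A"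
proof (rule ccontr)
  assume nx: "\<not> ?thesis"
  let ?f = "\<lambda>x. a + b - x"
  have fin: "finite A" using assms(1) finite_subset by blast
  have inj: "inj_on ?f A" by (rule inj_onI) simp
  have disj: "A \<inter> ?f ` A = {}" using nx by auto
  have sub: "A \<union> ?f ` A \<subseteq> {a..b}" using assms(1) by (auto simp: subset_iff)
  have "card (A \<union> ?f ` A) = card A + card A"
    using card_Un_disjoint[OF fin finite_imageI[OF fin] disj] card_image[OF inj] by simp
  moreover have "card (A \<union> ?f ` A) \<le> card {a..b}" by (rule card_mono[OF _ sub]) simp
  ultimately have "2 * int (card A) \<le> int (card {a..b})" by linarith
  moreover have "int (card {a..b}) = (if b - a + 1 \<ge> 0 then b - a + 1 else 0)" by simp
  moreover have "int (card A) \<ge> 0" by simp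
  ultimately show False using assms(3) ab by (smt (verit))
qed

theorem lemma1:
  fixes m :: int and M :: "int set"
  assumes "m \<ge> 1"
    and "M \<subseteq> {1..m}"
    and "\<And>k. 0 < k \<Longrightarrow> k \<le> m \<Longrightarrow> 2 * int (card (M \<inter> {1..k})) > k"
    and "\<And>k. 0 < k \<Longrightarrow> k \<le> m \<Longrightarrow> 2 * int (card (M \<inter> {m-k+1..m})) > k"
  shows "sumset M = {2..2*m}"
proof
  show "sumset M \<subseteq> {2..2*m}" using assms(2) unfolding sumset_def by (auto simp: subset_iff; smt (verit))
next
  show "{2..2*m} \<subseteq> sumset M"
  proof
    fix n assume n: "n \<in> {2..2*m}"
    show "n \<in> sumset M"
    proof (cases "n \<le> m + 1")
      case True
      have "2 * int (card (M \<inter> {1..n-1})) > (n-1) - 1 + 1" using assms(3)[of "n-1"] True n by auto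
      then obtain x where "x \<in> M \<inter> {1..n-1}" "1 + (n-1) - x \<in> M \<inter> {1..n-1}"
        using refl_pair[of "M \<inter> {1..n-1}" 1 "n-1"] n by auto
      then show ?thesis unfolding sumset_def by force
    next
      case False
      have "2 * int (card (M \<inter> {m-(2*m+1-n)+1..m})) > m - (m-(2*m+1-n)+1) + 1"
        using assms(4)[of "2*m+1-n"] False n by auto
      then obtain x where "x \<in> M \<inter> {m-(2*m+1-n)+1..m}" "(m-(2*m+1-n)+1) + m - x \<in> M \<inter> {m-(2*m+1-n)+1..m}"
        using refl_pair[of "M \<inter> {m-(2*m+1-n)+1..m}" "m-(2*m+1-n)+1" m] n False by auto
      then show ?thesis unfolding sumset_def by force
    qed
  qed
qed

end
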